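(* Let $A_j$, $A$, $\gamma>0$, $M_\gamma$, $\sigma_\gamma$, and the iterates $q_\gamma^k$, $\tilde q_\gamma^k$ be as follows: $A_j\in\mathbb{C}^{r_j\times n}$, $A=\begin{bmatrix}A_1\\ \vdots\\ A_m\end{bmatrix}$ of full row rank, $D_\gamma=\operatorname{diag}(\gamma I+A_jA_j^* )_{j}$, $L$ strictly block lower triangular with $(i,j)$ block $A_iA_j^*$ ($i>j$), $M_\gamma=(D_\gamma+L)^{-1}$, $R_\gamma=(D_{2\gamma})^{1/2}M_\gamma A$, $\sigma_\gamma$ the smallest nonzero singular value of $R_\gamma$, and $q_\gamma^k$ (resp. $\tilde q_\gamma^k$) the iterates starting at $0$ of $q^{k+1}=(I-A^*M_\gamma A)q^k+A^*M_\gamma p$ with exact data $p$ (resp. with data $\tilde p=\tilde p^{(N)}$). Suppose that, for a sequence of perturbed data $\tilde p^{(N)}$ indexed by the number $N$ of realizations, $\sqrt N(\tilde p^{(N)}-p)$ converges in distribution to a centered Gaussian $\mathcal N(0,\Theta)$ with covariance $\Theta$ (in the paper $\Theta=AHA^*+\delta^2 I$, with $H$ a diagonal nonnegative matrix and $\delta\ge 0$ the noise level). Then for each fixed $k\ge1$, $e^k=\tilde q_\gamma^k-q_\gamma^k$ satisfies $\sqrt N e^k\xrightarrow{d}\mathcal N(0,\Lambda_k)$ for a covariance matrix $\Lambda_k$ with $$\|\Lambda_k\|\le\left[\frac{1-(1-\sigma_\gamma^2)^{k/2}}{1-(1-\sigma_\gamma^2)^{1/2}}\right]^2\|A^*M_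\gamma\|^2\,\|\Theta\|.$$
   Context: $A^*$ is the conjugate transpose, $D_{2\gamma}$ is $D_\gamma$ with $\gamma$ replaced by $2\gamma$, $(D_{2\gamma})^{1/2}$ its Hermitian positive definite square root; $\|\cdot\|$ is the operator 2-norm; $\xrightarrow{d}$ denotes convergence in distribution. *)

theory Defs
  imports "HOL-Analysis.Analysis" "HOL-Probability.Probability"
begin

section \<open>Complex matrix notions\<close>

text \<open>Conjugate transpose.\<close>
definition cadj :: "complex^'n^'m \<Rightarrow> complex^'m^'n" where
  "cadj A = (\<chi> i j. cnj (A $ j $ i))"

definition cinner :: "complex^'n \<Rightarrow> complex^'n \<Rightarrow> complex" where
  "cinner x y = (\<Sum>i\<in>UNIV. cnj (x $ i) * y $ i)"

definition hermitian_mat :: "complex^'n^'n \<Rightarrow> bool" where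
  "hermitian_mat S \<longleftrightarrow> cadj S = S"

definition hpd_mat :: "complex^'n^'n \<Rightarrow> bool" where
  "hpd_mat S \<longleftrightarrow> hermitian_mat S \<and> (\<forall>x. x \<noteq> 0 \<longrightarrow> 0 < Re (cinner x (S *v x)))"

text \<open>Hermitian positive definite square root.\<close>
definition hpd_sqrt :: "complex^'n^'n \<Rightarrow> complex^'n^'n" where
  "hpd_sqrt D = (THE S. hpd_mat S \<and> S ** S = D)"

text \<open>Operator 2-norm (Euclidean norm on complex vectors).\<close>
definition cmat_norm :: "complex^'n^'m \<Rightarrow> real" where
  "cmat_norm B = onorm (\<lambda>x. B *v x)"

text \<open>Singular values of R: the s \<ge> 0 with s^2 an eigenvalue of R^* R;
  smallest nonzero singular value.\<close>
definition singular_values :: "complex^'n^'m \<Rightarrow> real set" where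
  "singular_values R = {s. 0 \<le> s \<and> (\<exists>v. v \<noteq> 0 \<and> (cadj R ** R) *v v = complex_of_real (s^2) *s v)}"

definition min_nonzero_sv :: "complex^'n^'m \<Rightarrow> real" where
  "min_nonzero_sv R = Inf (singular_values R - {0})"

section \<open>The block iteration\<close>

text \<open>Rows of A are grouped into blocks: row i belongs to block blk i; blocks are
  ordered by their index (block A_j has index j).\<close>

definition Dgam :: "('r \<Rightarrow> nat) \<Rightarrow> complex^'n^'r \<Rightarrow> real \<Rightarrow> complex^'r^'r" where
  "Dgam blk A \<gamma> = (\<chi> i j. if blk i = blk j
      then (A ** cadj A) $ i $ j + (if i = j then complex_of_real \<gamma> else 0) else 0)"

definition Lblk :: "('r \<Rightarrow> nat) \<Rightarrow> complex^'n^'r \<Rightarrow> complex^'r^'r" where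
  "Lblk blk A = (\<chi> i j. if blk j < blk i then (A ** cadj A) $ i $ j else 0)"

definition Mgam :: "('r \<Rightarrow> nat) \<Rightarrow> complex^'n^'r \<Rightarrow> real \<Rightarrow> complex^'r^'r" where
  "Mgam blk A \<gamma> = matrix_inv (Dgam blk A \<gamma> + Lblk blk A)"

definition Rgam :: "('r \<Rightarrow> nat) \<Rightarrow> complex^'n^'r \<Rightarrow> real \<Rightarrow> complex^'n^'r" where
  "Rgam blk A \<gamma> = hpd_sqrt (Dgam blk A (2 * \<gamma>)) ** Mgam blk A \<gamma> ** A"

definition sigma_gam :: "('r \<Rightarrow> nat) \<Rightarrow> complex^'n^'r \<Rightarrow> real \<Rightarrow> real" where
  "sigma_gam blk A \<gamma> = min_nonzero_sv (Rgam blk A \<gamma>)"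

text \<open>q^0 = 0, q^{k+1} = (I - A^* M A) q^k + A^* M p.\<close>
primrec qiter :: "complex^'n^'r \<Rightarrow> complex^'r^'r \<Rightarrow> complex^'r \<Rightarrow> nat \<Rightarrow> complex^'n" where
  "qiter A M p 0 = 0"
| "qiter A M p (Suc k) = (mat 1 - cadj A ** M ** A) *v qiter A M p k + (cadj A ** M) *v p"

section \<open>Probability\<close>

text \<open>Convergence in distribution of random vectors X N (defined on probability
  spaces P N) to the probability law mu: E f(X_N) \<rightarrow> \<integral> f d\<mu> for all bounded continuous f.\<close>
definition conv_in_distr ::
  "(nat \<Rightarrow> 'a measure) \<Rightarrow> (nat \<Rightarrow> 'a \<Rightarrow> 'v::topological_space) \<Rightarrow> 'v measure \<Rightarrow> bool" where
  "conv_in_distr P X \<mu> \<longleftrightarrow>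
     (\<forall>N. prob_space (P N) \<and> X N \<in> borel_measurable (P N)) \<and>
     prob_space \<mu> \<and> sets \<mu> = sets borel \<and>
     (\<forall>f :: 'v \<Rightarrow> real. continuous_on UNIV f \<longrightarrow> bounded (range f) \<longrightarrow>
        (\<lambda>N. \<integral>x. f (X N x) \<partial>P N) \<longlonglongrightarrow> (\<integral>x. f x \<partial>\<mu>))"

text \<open>Centered real normal law of variance v (degenerate point mass if v = 0).\<close>
definition centered_normal :: "real \<Rightarrow> real measure" where
  "centered_normal v = (if v = 0 then return borel 0 else density lborel (normal_density 0 (sqrt v)))"

text \<open>Centered Gaussian law on C^r with covariance Theta = E[x x^*]: every real-linear
  functional of x is centered normal, and the second moments are given by Theta.\<close>
definition centered_gaussian :: "(complex^'r) measure \<Rightarrow> complex^'r^'r \<Rightarrow> bool" where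
  "centered_gaussian \<mu> \<Theta> \<longleftrightarrow>
     prob_space \<mu> \<and> sets \<mu> = sets borel \<and>
     (\<forall>l :: complex^'r \<Rightarrow> real. linear l \<longrightarrow>
        (\<exists>v\<ge>0. distr \<mu> borel l = centered_normal v)) \<and>
     (\<forall>i j. integrable \<mu> (\<lambda>x. x $ i * cnj (x $ j)) \<and>
            (\<integral>x. x $ i * cnj (x $ j) \<partial>\<mu>) = \<Theta> $ i $ j)"

end

theory Submission
  imports Defs
begin

(* ---- part W1 ---- *)


lemma cadj_nth[simp]: "cadj A $ i $ j = cnj (A $ j $ i)"
  by (simp add: cadj_def)

lemma cadj_cadj[simp]: "cadj (cadj A) = A"
  by (simp add: vec_eq_iff)

lemma cadj_mult: "cadj (A ** B) = cadj B ** cadj A"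
  by (simp add: vec_eq_iff matrix_matrix_mult_def mult.commute)

lemma cadj_add: "cadj (A + B) = cadj A + cadj B"
  by (simp add: vec_eq_iff)

lemma cadj_diff: "cadj (A - B) = cadj A - cadj B"
  by (simp add: vec_eq_iff)

lemma cadj_mat1[simp]: "cadj (mat 1) = mat 1"
  by (simp add: vec_eq_iff mat_def)

lemma cadj_zero[simp]: "cadj 0 = 0"
  by (simp add: vec_eq_iff)

lemma cinner_mv: "cinner x (A *v y) = cinner (cadj A *v x) y"
proof -
  have "cinner x (A *v y) = (\<Sum>i\<in>UNIV. \<Sum>j\<in>UNIV. cnj (x$i) * A$i$j * y$j)"
    unfolding cinner_def matrix_vector_mult_def by (simp add: sum_distrib_left mult.assoc)
  also have "\<dots> = (\<Sum>j\<in>UNIV. \<Sum>i\<in>UNIV. cnj (x$i) * A$i$j * y$j)" by (rule sum.swap)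
  also have "\<dots> = cinner (cadj A *v x) y"
    unfolding cinner_def matrix_vector_mult_def
    by (simp add: sum_distrib_left mult_ac)
  finally show ?thesis .
qed

lemma cinner_commute: "cinner y x = cnj (cinner x y)"
  by (simp add: cinner_def mult.commute)

lemma cinner_add_right: "cinner x (y + z) = cinner x y + cinner x z"
  by (simp add: cinner_def distrib_left sum.distrib)
lemma cinner_add_left: "cinner (x + y) z = cinner x z + cinner y z"
  by (simp add: cinner_def distrib_right sum.distrib)
lemma cinner_diff_right: "cinner x (y - z) = cinner x y - cinner x z"
  by (simp add: cinner_def right_diff_distrib sum_subtractf)
lemma cinner_diff_left: "cinner (x - y) z = cinner x z - cinner y z"
  by (simp add: cinner_def left_diff_distrib sum_subtractf)
lemma cinner_scale_right: "cinner x (c *s y) = c * cinner x y"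
  by (simp add: cinner_def sum_distrib_left mult_ac)
lemma cinner_scale_left: "cinner (c *s x) y = cnj c * cinner x y"
  by (simp add: cinner_def sum_distrib_left mult_ac)
lemma cinner_zero_right[simp]: "cinner x 0 = 0"
  by (simp add: cinner_def)
lemma cinner_zero_left[simp]: "cinner 0 x = 0"
  by (simp add: cinner_def)
lemma cinner_sum_right: "finite S \<Longrightarrow> cinner x (\<Sum>u\<in>S. f u) = (\<Sum>u\<in>S. cinner x (f u))"
  by (induction S rule: finite_induct) (auto simp: cinner_add_right)
lemma cinner_sum_left: "finite S \<Longrightarrow> cinner (\<Sum>u\<in>S. f u) x = (\<Sum>u\<in>S. cinner (f u) x)"
  by (induction S rule: finite_induct) (auto simp: cinner_add_left)

lemma Re_cinner: "Re (cinner x y) = x \<bullet> y"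
  by (simp add: cinner_def inner_vec_def inner_complex_def)

lemma cinner_self: "cinner x x = complex_of_real ((norm x)\<^sup>2)"
proof -
  have "cinner x x = (\<Sum>i\<in>UNIV. complex_of_real ((cmod (x $ i))\<^sup>2))"
    unfolding cinner_def by (intro sum.cong refl) (metis complex_norm_square mult.commute of_real_power)
  also have "\<dots> = complex_of_real (\<Sum>i\<in>UNIV. (cmod (x $ i))\<^sup>2)" by simp
  also have "(\<Sum>i\<in>UNIV. (cmod (x $ i))\<^sup>2) = (norm x)\<^sup>2"
    by (simp add: norm_vec_def L2_set_def sum_nonneg)
  finally show ?thesis .
qed

lemma Re_cinner_self: "Re (cinner x x) = (norm x)\<^sup>2"
  by (simp add: cinner_self)

lemma cinner_self_eq_0: "cinner x x = 0 \<longleftrightarrow> x = 0"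
  by (simp add: cinner_self)

lemma mv_scaleR: "(A::complex^'n^'m) *v (c *\<^sub>R x) = c *\<^sub>R (A *v x)"
  using linear_iff matrix_vector_mul_linear by blast

lemma mv_scale: "(A::complex^'n^'m) *v (c *s x) = c *s (A *v x)"
  by (simp add: vec_eq_iff matrix_vector_mult_def sum_distrib_left mult_ac)

lemma mv_sum: "finite S \<Longrightarrow> (A::complex^'n^'m) *v (\<Sum>u\<in>S. f u) = (\<Sum>u\<in>S. A *v f u)"
  by (induction S rule: finite_induct) (auto simp: matrix_vector_right_distrib)

lemma bl_mv: "bounded_linear (\<lambda>x. (A::complex^'n^'m) *v x)"
  by (simp add: linear_conv_bounded_linear)

lemma cont_mv[continuous_intros]: "continuous_on S f \<Longrightarrow> continuous_on S (\<lambda>x. (A::complex^'n^'m) *v f x)"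
  by (rule continuous_on_compose2[OF linear_continuous_on[OF bl_mv], of S f]) auto

lemma cont_cinner[continuous_intros]: "continuous_on S f \<Longrightarrow> continuous_on S g \<Longrightarrow> continuous_on S (\<lambda>x. cinner (f x) (g x))"
  unfolding cinner_def by (intro continuous_intros)

lemma cmat_norm_bound: "norm (A *v x) \<le> cmat_norm A * norm x"
  unfolding cmat_norm_def using onorm[OF bl_mv] .

lemma cmat_norm_nonneg: "0 \<le> cmat_norm A"
  unfolding cmat_norm_def using onorm_pos_le[OF bl_mv] .

lemma cmat_norm_le: "0 \<le> b \<Longrightarrow> (\<And>x. norm (A *v x) \<le> b * norm x) \<Longrightarrow> cmat_norm A \<le> b"
  unfolding cmat_norm_def by (rule onorm_bound)

lemma cmat_norm_mult: "cmat_norm (A ** B) \<le> cmat_norm A * cmat_norm B"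
proof (rule cmat_norm_le)
  show "0 \<le> cmat_norm A * cmat_norm B" by (simp add: cmat_norm_nonneg)
  fix x
  have "norm ((A ** B) *v x) = norm (A *v (B *v x))" by (simp add: matrix_vector_mul_assoc)
  also have "\<dots> \<le> cmat_norm A * norm (B *v x)" by (rule cmat_norm_bound)
  also have "\<dots> \<le> cmat_norm A * (cmat_norm B * norm x)"
    by (intro mult_left_mono cmat_norm_bound cmat_norm_nonneg)
  finally show "norm ((A ** B) *v x) \<le> cmat_norm A * cmat_norm B * norm x" by (simp add: mult_ac)
qed

lemma cmat_norm_cadj: "cmat_norm (cadj A) \<le> cmat_norm A"
proof (rule cmat_norm_le[OF cmat_norm_nonneg])
  fix x
  let ?y = "cadj A *v x"
  have "(norm ?y)\<^sup>2 = Re (cinner ?y ?y)" by (simp add: Re_cinner_self)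
  also have "cinner ?y ?y = cinner x (A *v ?y)" by (simp add: cinner_mv)
  also have "Re \<dots> = x \<bullet> (A *v ?y)" by (rule Re_cinner)
  also have "\<dots> \<le> norm x * norm (A *v ?y)" by (rule norm_cauchy_schwarz)
  also have "\<dots> \<le> norm x * (cmat_norm A * norm ?y)"
    by (intro mult_left_mono cmat_norm_bound) simp
  finally have "norm ?y * norm ?y \<le> (cmat_norm A * norm x) * norm ?y"
    by (simp add: power2_eq_square mult_ac)
  then show "norm ?y \<le> cmat_norm A * norm x"
    by (cases "norm ?y = 0") (auto simp: cmat_norm_nonneg)
qed


(* ---- part W2 ---- *)


lemma herm_cinner: "hermitian_mat H \<Longrightarrow> cinner x (H *v y) = cinner (H *v x) y"
  by (simp add: hermitian_mat_def cinner_mv)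

lemma herm_real: "hermitian_mat H \<Longrightarrow> cinner x (H *v x) = complex_of_real (Re (cinner x (H *v x)))"
proof -
  assume h: "hermitian_mat H"
  have "cinner x (H *v x) = cnj (cinner x (H *v x))"
    using herm_cinner[OF h, of x x] cinner_commute[of "H *v x" x] by simp
  then have "Im (cinner x (H *v x)) = 0" by (metis Reals_cnj_iff complex_is_Real_iff)
  then show ?thesis by (simp add: complex_eq_iff)
qed

lemma scaleR_as_scale: "(t::real) *\<^sub>R (x::complex^'n) = complex_of_real t *s x"
  unfolding vec_eq_iff by (auto simp: scaleR_conv_of_real[where 'a=complex])

lemma norm_scale: "norm ((c::complex) *s (x::complex^'n)) = cmod c * norm x"
proof -
  have "(norm (c *s x))\<^sup>2 = Re (cinner (c *s x) (c *s x))" by (simp add: Re_cinner_self)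
  also have "cinner (c *s x) (c *s x) = (cnj c * c) * cinner x x"
    by (simp add: cinner_scale_left cinner_scale_right)
  also have "Re \<dots> = (cmod c)\<^sup>2 * (norm x)\<^sup>2"
    by (simp add: cinner_self complex_norm_square[symmetric] mult.commute)
  finally have "(norm (c *s x))\<^sup>2 = (cmod c * norm x)\<^sup>2" by (simp add: power_mult_distrib)
  then show ?thesis by (simp add: power2_eq_iff_nonneg)
qed

text \<open>Existence of an eigenvector in the orthogonal complement of a set of eigenvectors.\<close>
lemma eig_in_compl:
  fixes H :: "complex^'n^'n"
  assumes h: "hermitian_mat H" and fB: "finite B"
    and eB: "\<forall>u\<in>B. \<exists>l::real. H *v u = complex_of_real l *s u"
    and w: "\<forall>u\<in>B. cinner u w = 0" and w0: "w \<noteq> 0"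
  shows "\<exists>e. (\<forall>u\<in>B. cinner u e = 0) \<and> cinner e e = 1 \<and> (\<exists>l::real. H *v e = complex_of_real l *s e)"
proof -
  define W where "W = {y::complex^'n. \<forall>u\<in>B. cinner u y = 0}"
  have Winv: "H *v y \<in> W" if "y \<in> W" for y
  proof -
    { fix u assume u: "u \<in> B"
      then obtain l::real where l: "H *v u = complex_of_real l *s u" using eB by blast
      have "cinner u (H *v y) = cinner (H *v u) y" by (rule herm_cinner[OF h])
      also have "\<dots> = 0" using that u by (simp add: l cinner_scale_left W_def)
      finally have "cinner u (H *v y) = 0" . }
    then show ?thesis by (simp add: W_def)
  qed
  have Wsub: "y - z \<in> W" "y + z \<in> W" "c *s y \<in> W" if "y \<in> W" "z \<in> W" for y z c
    using that by (auto simp: W_def cinner_diff_right cinner_add_right cinner_scale_right)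
  have W0: "0 \<in> W" by (simp add: W_def)
  define f where "f y = Re (cinner y (H *v y))" for y
  define K where "K = W \<inter> sphere 0 1"
  have clW: "closed W"
  proof -
    have "W = (\<Inter>u\<in>B. {y. cinner u y = 0})" by (auto simp: W_def)
    moreover have "closed {y. cinner u y = 0}" for u
      by (intro closed_Collect_eq continuous_intros)
    ultimately show ?thesis by auto
  qed
  have cK: "compact K" unfolding K_def by (intro closed_Int_compact compact_sphere clW)
  have wW: "w \<in> W" using w by (simp add: W_def)
  define w1 where "w1 = complex_of_real (1 / norm w) *s w"
  have "w1 \<in> K" using w0 wW Wsub(3)[OF wW wW]
    by (simp add: K_def w1_def norm_scale norm_divide)
  then have Kne: "K \<noteq> {}" by auto
  have cf: "continuous_on K f" unfolding f_def by (intro continuous_intros)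
  obtain x0 where x0K: "x0 \<in> K" and x0min: "\<And>y. y \<in> K \<Longrightarrow> f x0 \<le> f y"
    using continuous_attains_inf[OF cK Kne cf] by blast
  define l where "l = f x0"
  have x0W: "x0 \<in> W" and nx0: "norm x0 = 1" using x0K by (auto simp: K_def)
  have fscale: "f (c *s y) = (cmod c)\<^sup>2 * f y" for c y
  proof -
    have "cinner (c *s y) (H *v (c *s y)) = (cnj c * c) * cinner y (H *v y)"
      by (simp add: mv_scale cinner_scale_left cinner_scale_right)
    then show ?thesis unfolding f_def
      by (simp add: complex_norm_square[symmetric] mult.commute)
  qed
  have fge: "f y \<ge> l * (norm y)\<^sup>2" if "y \<in> W" for y
  proof (cases "y = 0")
    case True then show ?thesis by (simp add: f_def)
  next
    case False
    define y1 where "y1 = complex_of_real (1 / norm y) *s y"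
    have "y1 \<in> K" using False Wsub(3)[OF that that] by (simp add: K_def y1_def norm_scale norm_divide)
    then have "l \<le> f y1" using x0min l_def by blast
    also have "f y1 = f y / (norm y)\<^sup>2" unfolding y1_def fscale
      by (simp add: power_divide norm_divide)
    finally show ?thesis using False by (simp add: field_simps)
  qed
  define g where "g = H *v x0 - complex_of_real l *s x0"
  have gW: "g \<in> W" unfolding g_def using Winv[OF x0W] Wsub(3)[OF x0W x0W] Wsub(1) by blast
  have hx0: "cinner x0 (H *v x0) = complex_of_real l"
    using herm_real[OF h, of x0] by (simp add: l_def f_def)
  have "g = 0"
  proof (rule ccontr)
    assume g0: "g \<noteq> 0"
    define n where "n = (norm g)\<^sup>2"
    have npos: "n > 0" using g0 by (simp add: n_def)
    define q where "q = f g - l * n"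
    have q0: "q \<ge> 0" using fge[OF gW] by (simp add: q_def n_def)
    define t where "t = n / (q + 1)"
    have tpos: "t > 0" using npos q0 by (simp add: t_def)
    have tq: "t * q < n" using npos q0 by (simp add: t_def field_simps)
    define b where "b = complex_of_real t *s g"
    have yW: "x0 - b \<in> W" using Wsub(1)[OF x0W Wsub(3)[OF gW gW]] by (simp add: b_def)
    have gx: "cinner g x0 = 0"
    proof -
      have "cinner x0 g = cinner x0 (H *v x0) - complex_of_real l * cinner x0 x0"
        by (simp add: g_def cinner_diff_right cinner_scale_right)
      also have "\<dots> = 0" using nx0 by (simp add: hx0 cinner_self)
      finally show ?thesis by (metis cinner_commute complex_cnj_zero)
    qed
    have e1: "cinner (x0 - b) (H *v (x0 - b)) =
        cinner x0 (H *v x0) - cinner x0 (H *v b) - cinner b (H *v x0) + cinner b (H *v b)"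
      by (simp add: matrix_vector_mult_diff_distrib cinner_diff_left cinner_diff_right)
    have e2: "cinner x0 (H *v b) = cinner (H *v x0) b" by (rule herm_cinner[OF h])
    have Hx0: "H *v x0 = g + complex_of_real l *s x0" by (simp add: g_def)
    have e3: "cinner (H *v x0) b = complex_of_real t * cinner g g"
      by (simp add: Hx0 b_def cinner_add_left cinner_scale_left cinner_scale_right gx
           cinner_commute[of x0 g])
    have e4: "cinner b (H *v x0) = complex_of_real t * cinner g g"
      by (simp add: Hx0 b_def cinner_add_right cinner_scale_left cinner_scale_right gx)
    have e5: "cinner b (H *v b) = complex_of_real (t^2) * cinner g (H *v g)"
      by (simp add: b_def mv_scale cinner_scale_left cinner_scale_right power2_eq_square)
    have fy: "f (x0 - b) = l - 2 * t * n + t^2 * f g"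
      unfolding f_def e1 e2 e3 e4 e5 by (simp add: hx0 cinner_self n_def)
    have "(norm (x0 - b))\<^sup>2 = Re (cinner (x0 - b) (x0 - b))" by (simp add: Re_cinner_self)
    also have "cinner (x0 - b) (x0 - b) = cinner x0 x0 - cinner x0 b - cinner b x0 + cinner b b"
      by (simp add: cinner_diff_left cinner_diff_right)
    also have "Re \<dots> = 1 + t^2 * n"
      using gx nx0 unfolding b_def cinner_scale_left cinner_scale_right
      by (simp add: cinner_self n_def cinner_commute[of x0 g] power2_eq_square)
    finally have ny: "(norm (x0 - b))\<^sup>2 = 1 + t^2 * n" .
    have "l * (1 + t^2 * n) \<le> l - 2 * t * n + t^2 * f g" using fge[OF yW] fy ny by simp
    then have "0 \<le> t * (t * q - 2 * n)" by (simp add: q_def algebra_simps power2_eq_square)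
    moreover have "t * (t * q - 2 * n) < 0" using tpos tq npos by (simp add: mult_pos_neg)
    ultimately show False by simp
  qed
  then have "H *v x0 = complex_of_real l *s x0" by (simp add: g_def)
  moreover have "cinner x0 x0 = 1" using nx0 by (simp add: cinner_self)
  ultimately show ?thesis using x0W by (auto simp: W_def)
qed


(* ---- part W3 ---- *)


lemma spectral:
  fixes H :: "complex^'n^'n"
  assumes h: "hermitian_mat H"
  shows "\<exists>B lam. finite B \<and> (\<forall>u\<in>B. cinner u u = 1) \<and> (\<forall>u\<in>B. \<forall>v\<in>B. u \<noteq> v \<longrightarrow> cinner u v = 0)
     \<and> (\<forall>u\<in>B. H *v u = complex_of_real (lam u) *s u) \<and> (\<forall>x. (\<Sum>u\<in>B. cinner u x *s u) = x)"
proof -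
  define good where "good B \<longleftrightarrow> finite B \<and> (\<forall>u\<in>B. cinner u u = 1) \<and>
     (\<forall>u\<in>B. \<forall>v\<in>B. u \<noteq> v \<longrightarrow> cinner u v = 0) \<and>
     (\<forall>u\<in>B. \<exists>l::real. H *v u = complex_of_real l *s u)" for B
  have bnd: "card B < DIM(complex^'n) + 1" if "good B" for B
  proof -
    have "pairwise orthogonal B" using that
      by (auto simp: good_def pairwise_def orthogonal_def Re_cinner[symmetric])
    moreover have "0 \<notin> B" using that by (auto simp: good_def)
    ultimately have "independent B" by (rule pairwise_orthogonal_independent)
    then show ?thesis using independent_bound by fastforce
  qed
  have "good {}" by (simp add: good_def)
  then obtain B where gB: "good B" and mx: "\<forall>B'. good B' \<longrightarrow> card B' \<le> card B"
    using Lattices_Big.ex_has_greatest_nat[of good "{}" card "DIM(complex^'n) + 1"] bnd by blast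
  have fB: "finite B" using gB by (simp add: good_def)
  have on1: "\<And>u. u \<in> B \<Longrightarrow> cinner u u = 1" using gB by (simp add: good_def)
  have on0: "\<And>u v. u \<in> B \<Longrightarrow> v \<in> B \<Longrightarrow> u \<noteq> v \<Longrightarrow> cinner u v = 0" using gB by (simp add: good_def)
  have span: "(\<Sum>u\<in>B. cinner u x *s u) = x" for x
  proof (rule ccontr)
    assume ne: "(\<Sum>u\<in>B. cinner u x *s u) \<noteq> x"
    define w where "w = x - (\<Sum>u\<in>B. cinner u x *s u)"
    have w0: "w \<noteq> 0" using ne by (simp add: w_def)
    have wB: "\<forall>v\<in>B. cinner v w = 0"
    proof
      fix v assume v: "v \<in> B"
      have "cinner v (\<Sum>u\<in>B. cinner u x *s u) = (\<Sum>u\<in>B. cinner u x * cinner v u)"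
        by (simp add: cinner_sum_right[OF fB] cinner_scale_right)
      also have "\<dots> = (\<Sum>u\<in>B. if u = v then cinner v x else 0)"
        by (rule sum.cong) (auto simp: on1 on0 v)
      also have "\<dots> = cinner v x" using v fB by simp
      finally show "cinner v w = 0" by (simp add: w_def cinner_diff_right)
    qed
    have eB': "\<forall>u\<in>B. \<exists>l::real. H *v u = complex_of_real l *s u" using gB by (simp add: good_def)
    obtain e where e: "\<forall>u\<in>B. cinner u e = 0" "cinner e e = 1"
        "\<exists>l::real. H *v e = complex_of_real l *s e"
      using eig_in_compl[OF h fB eB' wB w0] by blast
    have eB: "e \<notin> B" using e(1,2) by auto
    have eu: "cinner e u = 0" if "u \<in> B" for u
      using e(1) that cinner_commute[of u e] by simp
    have "good (insert e B)"
      unfolding good_def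
    proof (intro conjI)
      show "finite (insert e B)" using fB by simp
      show "\<forall>u\<in>insert e B. cinner u u = 1" using on1 e(2) by blast
      show "\<forall>u\<in>insert e B. \<forall>v\<in>insert e B. u \<noteq> v \<longrightarrow> cinner u v = 0"
        using on0 e(1) eu by blast
      show "\<forall>u\<in>insert e B. \<exists>l::real. H *v u = complex_of_real l *s u"
        using e(3) eB' by blast
    qed
    then have "card (insert e B) \<le> card B" using mx by blast
    with eB fB show False by simp
  qed
  define lam where "lam u = (SOME l::real. H *v u = complex_of_real l *s u)" for u
  have ev: "\<forall>u\<in>B. H *v u = complex_of_real (lam u) *s u"
    unfolding lam_def using gB by (auto simp: good_def intro: someI_ex)
  show ?thesis
  proof (intro exI[of _ B] exI[of _ lam] conjI)
    show "finite B" by (rule fB)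
    show "\<forall>u\<in>B. cinner u u = 1" using on1 by blast
    show "\<forall>u\<in>B. \<forall>v\<in>B. u \<noteq> v \<longrightarrow> cinner u v = 0" using on0 by blast
    show "\<forall>u\<in>B. H *v u = complex_of_real (lam u) *s u" by (rule ev)
    show "\<forall>x. (\<Sum>u\<in>B. cinner u x *s u) = x" using span by blast
  qed
qed

definition outer :: "(complex^'n) set \<Rightarrow> (complex^'n \<Rightarrow> complex) \<Rightarrow> complex^'n^'n" where
  "outer B c = (\<chi> i j. \<Sum>u\<in>B. c u * u$i * cnj (u$j))"

lemma outer_mv: "finite B \<Longrightarrow> outer B c *v x = (\<Sum>u\<in>B. (c u * cinner u x) *s u)"
proof -
  assume fB: "finite B"
  have "(outer B c *v x) $ i = (\<Sum>u\<in>B. (c u * cinner u x) *s u) $ i" for i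
  proof -
    have "(outer B c *v x) $ i = (\<Sum>j\<in>UNIV. (\<Sum>u\<in>B. c u * u$i * cnj (u$j)) * x$j)"
      by (simp add: outer_def matrix_vector_mult_def)
    also have "\<dots> = (\<Sum>j\<in>UNIV. \<Sum>u\<in>B. c u * (u$i * (cnj (u$j) * x$j)))"
      by (simp only: sum_distrib_right mult.assoc)
    also have "\<dots> = (\<Sum>u\<in>B. \<Sum>j\<in>UNIV. c u * (u$i * (cnj (u$j) * x$j)))" by (rule sum.swap)
    also have "\<dots> = (\<Sum>u\<in>B. c u * (u$i * cinner u x))"
      by (simp only: cinner_def sum_distrib_left)
    also have "\<dots> = (\<Sum>u\<in>B. (c u * cinner u x) *s u) $ i"
      by (simp add: sum_component mult_ac)
    finally show ?thesis .
  qed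
  then show ?thesis by (simp add: vec_eq_iff)
qed

lemma cadj_outer: "(\<And>u. u \<in> B \<Longrightarrow> cnj (c u) = c u) \<Longrightarrow> cadj (outer B c) = outer B c"
  by (simp add: vec_eq_iff outer_def cnj_sum mult_ac)

lemma onb_ext:
  fixes M N :: "complex^'n^'m"
  assumes fB: "finite B" and span: "\<forall>x. (\<Sum>u\<in>B. cinner u x *s u) = x"
    and eq: "\<And>u. u \<in> B \<Longrightarrow> M *v u = N *v u"
  shows "M = N"
proof -
  have "M *v x = N *v x" for x
  proof -
    have "M *v x = M *v (\<Sum>u\<in>B. cinner u x *s u)" using span by simp
    also have "\<dots> = (\<Sum>u\<in>B. cinner u x *s (M *v u))" by (simp add: mv_sum[OF fB] mv_scale)
    also have "\<dots> = (\<Sum>u\<in>B. cinner u x *s (N *v u))" using eq by simp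
    also have "\<dots> = N *v (\<Sum>u\<in>B. cinner u x *s u)" by (simp add: mv_sum[OF fB] mv_scale)
    also have "\<dots> = N *v x" using span by simp
    finally show ?thesis .
  qed
  then show ?thesis by (simp add: matrix_eq)
qed

lemma hpd_inj: "hpd_mat P \<Longrightarrow> P *v z + complex_of_real s *s z = 0 \<Longrightarrow> s \<ge> 0 \<Longrightarrow> z = 0"
proof (rule ccontr)
  assume h: "hpd_mat P" and e: "P *v z + complex_of_real s *s z = 0" and s: "s \<ge> 0" and z: "z \<noteq> 0"
  have "0 < Re (cinner z (P *v z))" using h z by (simp add: hpd_mat_def)
  moreover have "cinner z (P *v z + complex_of_real s *s z) = 0" using e by simp
  then have "cinner z (P *v z) + complex_of_real s * cinner z z = 0"
    by (simp only: cinner_add_right cinner_scale_right)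
  then have "Re (cinner z (P *v z) + complex_of_real s * cinner z z) = 0" by simp
  then have "Re (cinner z (P *v z)) + s * (norm z)\<^sup>2 = 0" by (simp add: cinner_self)
  moreover have "0 \<le> s * (norm z)\<^sup>2" using s by simp
  ultimately show False by linarith
qed

lemma hpd_sqrt:
  fixes D :: "complex^'n^'n"
  assumes hD: "hpd_mat D"
  shows "hpd_mat (hpd_sqrt D) \<and> hpd_sqrt D ** hpd_sqrt D = D"
proof -
  have h: "hermitian_mat D" using hD by (simp add: hpd_mat_def)
  obtain B lam where fB: "finite B" and on1: "\<forall>u\<in>B. cinner u u = 1"
    and on0: "\<forall>u\<in>B. \<forall>v\<in>B. u \<noteq> v \<longrightarrow> cinner u v = 0"
    and ev: "\<forall>u\<in>B. D *v u = complex_of_real (lam u) *s u"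
    and span: "\<forall>x. (\<Sum>u\<in>B. cinner u x *s u) = x"
    using spectral[OF h] by blast
  have lpos: "lam u > 0" if "u \<in> B" for u
  proof -
    have "u \<noteq> 0" using on1 that by auto
    then have "0 < Re (cinner u (D *v u))" using hD by (simp add: hpd_mat_def)
    also have "cinner u (D *v u) = complex_of_real (lam u)"
      using ev on1 that by (simp add: cinner_scale_right)
    finally show ?thesis by simp
  qed
  define c where "c u = complex_of_real (sqrt (lam u))" for u
  define S where "S = outer B c"
  have Su: "S *v u = c u *s u" if "u \<in> B" for u
  proof -
    have "S *v u = (\<Sum>v\<in>B. (c v * cinner v u) *s v)" by (simp add: S_def outer_mv[OF fB])
    also have "\<dots> = (\<Sum>v\<in>B. if v = u then c u *s u else 0)"
      by (rule sum.cong) (use on1 on0 that in auto)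
    also have "\<dots> = c u *s u" using that fB by simp
    finally show ?thesis .
  qed
  have SS: "S ** S = D"
  proof (rule onb_ext[OF fB span])
    fix u assume u: "u \<in> B"
    have "(S ** S) *v u = S *v (c u *s u)" by (simp add: matrix_vector_mul_assoc[symmetric] Su u)
    also have "\<dots> = (c u * c u) *s u" by (simp add: mv_scale Su u)
    also have "c u * c u = complex_of_real (lam u)"
      using lpos[OF u] by (simp add: c_def of_real_mult[symmetric] del: of_real_mult)
    finally show "(S ** S) *v u = D *v u" using ev u by simp
  qed
  have Sh: "hpd_mat S"
    unfolding hpd_mat_def hermitian_mat_def
  proof (intro conjI allI impI)
    show "cadj S = S" unfolding S_def by (rule cadj_outer) (simp add: c_def)
    fix x :: "complex^'n" assume x: "x \<noteq> 0"
    have "cinner x (S *v x) = (\<Sum>u\<in>B. c u * cinner u x * cinner x u)"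
      by (simp add: S_def outer_mv[OF fB] cinner_sum_right[OF fB] cinner_scale_right)
    also have "\<dots> = (\<Sum>u\<in>B. complex_of_real (sqrt (lam u) * (cmod (cinner u x))\<^sup>2))"
      by (rule sum.cong) (simp_all add: c_def cinner_commute[of x] complex_norm_square[symmetric])
    finally have e: "Re (cinner x (S *v x)) = (\<Sum>u\<in>B. sqrt (lam u) * (cmod (cinner u x))\<^sup>2)"
      by simp
    obtain u where u: "u \<in> B" "cinner u x \<noteq> 0"
    proof (rule ccontr)
      assume "\<not> thesis"
      then have "\<forall>u\<in>B. cinner u x = 0" using that by blast
      then have "(\<Sum>u\<in>B. cinner u x *s u) = 0" by simp
      then show False using span x by simp
    qed
    have "0 < sqrt (lam u) * (cmod (cinner u x))\<^sup>2" using lpos[OF u(1)] u(2) by simp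
    also have "\<dots> \<le> (\<Sum>u\<in>B. sqrt (lam u) * (cmod (cinner u x))\<^sup>2)"
      by (rule member_le_sum) (auto simp: fB u less_imp_le[OF lpos])
    finally show "0 < Re (cinner x (S *v x))" using e by simp
  qed
  have uniq: "P = S" if "hpd_mat P \<and> P ** P = D" for P
  proof (rule onb_ext[OF fB span])
    fix u assume u: "u \<in> B"
    define z where "z = P *v u - c u *s u"
    have z1: "P *v z = (P ** P) *v u - c u *s (P *v u)"
      by (simp only: z_def matrix_vector_mult_diff_distrib mv_scale matrix_vector_mul_assoc)
    have z2: "c u *s z = c u *s (P *v u) - (c u * c u) *s u"
      by (simp only: z_def vector_ssub_ldistrib vector_smult_assoc)
    have "P *v z + c u *s z = (P ** P) *v u - (c u * c u) *s u"
      unfolding z1 z2 by simp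
    also have "c u * c u = complex_of_real (lam u)"
      using lpos[OF u] by (simp add: c_def of_real_mult[symmetric] del: of_real_mult)
    also have "(P ** P) *v u - complex_of_real (lam u) *s u = 0"
      using that ev u by simp
    finally have "z = 0" using hpd_inj[of P z "sqrt (lam u)"] that less_imp_le[OF lpos[OF u]]
      by (simp add: c_def)
    then show "P *v u = S *v u" by (simp add: z_def Su u)
  qed
  have "hpd_sqrt D = S" unfolding hpd_sqrt_def
  proof (rule the_equality)
    show "hpd_mat S \<and> S ** S = D" using Sh SS by simp
    show "\<And>P. hpd_mat P \<and> P ** P = D \<Longrightarrow> P = S" by (rule uniq)
  qed
  then show ?thesis using Sh SS by simp
qed


(* ---- part W4 ---- *)


lemma Dgam_split: "Dgam blk A g = (\<chi> i j. if blk i = blk j then (A ** cadj A) $ i $ j else 0) + mat (complex_of_real g)"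
  by (simp add: vec_eq_iff Dgam_def mat_def)

lemma blockdiag_nonneg:
  fixes A :: "complex^'n^'r" and blk :: "'r \<Rightarrow> nat"
  shows "0 \<le> Re (cinner x ((\<chi> i j. if blk i = blk j then (A ** cadj A) $ i $ j else 0) *v x))"
proof -
  let ?G = "A ** cadj A"
  define y where "y b = (\<chi> i. if blk i = b then x $ i else 0)" for b
  have e1: "cinner x ((\<chi> i j. if blk i = blk j then ?G $ i $ j else 0) *v x) =
      (\<Sum>i\<in>UNIV. \<Sum>j\<in>UNIV. if blk i = blk j then cnj (x$i) * ?G$i$j * x$j else 0)"
    unfolding cinner_def matrix_vector_mult_def
    by (simp add: sum_distrib_left if_distrib if_distribR mult.assoc cong: if_cong)
  have e2b: "cinner (y b) (?G *v y b) =
      (\<Sum>i\<in>UNIV. \<Sum>j\<in>UNIV. if blk i = b \<and> blk j = b then cnj (x$i) * ?G$i$j * x$j else 0)" for b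
    unfolding cinner_def matrix_vector_mult_def
  proof (intro sum.cong refl)
    fix i
    show "cnj ((y b) $ i) * (\<chi> i. \<Sum>j\<in>UNIV. ?G $ i $ j * y b $ j) $ i =
      (\<Sum>j\<in>UNIV. if blk i = b \<and> blk j = b then cnj (x$i) * ?G$i$j * x$j else 0)"
      by (cases "blk i = b") (simp_all add: y_def sum_distrib_left mult.assoc if_distrib cong: if_cong)
  qed
  have e2: "(\<Sum>b\<in>blk ` UNIV. cinner (y b) (?G *v y b)) =
      (\<Sum>b\<in>blk ` UNIV. \<Sum>i\<in>UNIV. \<Sum>j\<in>UNIV. if blk i = b \<and> blk j = b then cnj (x$i) * ?G$i$j * x$j else 0)"
    by (simp only: e2b)
  also have "\<dots> = (\<Sum>i\<in>UNIV. \<Sum>b\<in>blk ` UNIV. \<Sum>j\<in>UNIV. if blk i = b \<and> blk j = b then cnj (x$i) * ?G$i$j * x$j else 0)"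
    by (rule sum.swap)
  also have "\<dots> = (\<Sum>i\<in>UNIV. \<Sum>j\<in>UNIV. \<Sum>b\<in>blk ` UNIV. if blk i = b \<and> blk j = b then cnj (x$i) * ?G$i$j * x$j else 0)"
    by (intro sum.cong refl sum.swap)
  also have "\<dots> = (\<Sum>i\<in>UNIV. \<Sum>j\<in>UNIV. if blk i = blk j then cnj (x$i) * ?G$i$j * x$j else 0)"
  proof (intro sum.cong refl)
    fix i j
    have "(\<Sum>b\<in>blk ` UNIV. if blk i = b \<and> blk j = b then cnj (x$i) * ?G$i$j * x$j else 0)
        = (\<Sum>b\<in>blk ` UNIV. if b = blk i then (if blk j = blk i then cnj (x$i) * ?G$i$j * x$j else 0) else 0)"
      by (intro sum.cong refl) auto
    also have "\<dots> = (if blk j = blk i then cnj (x$i) * ?G$i$j * x$j else 0)"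
      by (simp add: sum.delta)
    finally show "(\<Sum>b\<in>blk ` UNIV. if blk i = b \<and> blk j = b then cnj (x$i) * ?G$i$j * x$j else 0)
        = (if blk i = blk j then cnj (x$i) * ?G$i$j * x$j else 0)" by (simp add: eq_commute)
  qed
  finally have "cinner x ((\<chi> i j. if blk i = blk j then ?G $ i $ j else 0) *v x) =
      (\<Sum>b\<in>blk ` UNIV. cinner (y b) (?G *v y b))" using e1 e2 by simp
  also have "\<dots> = (\<Sum>b\<in>blk ` UNIV. complex_of_real ((norm (cadj A *v y b))\<^sup>2))"
    by (intro sum.cong refl) (simp add: matrix_vector_mul_assoc[symmetric] cinner_mv cinner_self)
  finally show ?thesis by (simp add: sum_nonneg)
qed

lemma cinner_mat: "cinner x (mat c *v x) = c * cinner x x"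
proof -
  have "mat c *v x = c *s x" by (simp add: vec_eq_iff matrix_vector_mult_def mat_def if_distrib if_distribR cong: if_cong)
  then show ?thesis by (simp add: cinner_scale_right)
qed

lemma Dgam_pos: "0 \<le> g \<Longrightarrow> g * (norm x)\<^sup>2 \<le> Re (cinner x (Dgam blk A g *v x))"
  using blockdiag_nonneg[of x blk A]
  by (simp add: Dgam_split matrix_vector_mult_add_rdistrib cinner_add_right cinner_mat cinner_self)

lemma G_cnj: "cnj ((A ** cadj A) $ j $ i) = (A ** cadj A) $ i $ j"
  by (simp add: matrix_matrix_mult_def cnj_sum mult.commute)

lemma Dgam_herm: "hermitian_mat (Dgam blk A g)"
  by (auto simp: hermitian_mat_def vec_eq_iff Dgam_def G_cnj)

lemma Dgam_hpd: "0 < g \<Longrightarrow> hpd_mat (Dgam blk A g)"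
  unfolding hpd_mat_def
proof (intro conjI allI impI Dgam_herm)
  fix x :: "complex^'a" assume "0 < g" "x \<noteq> 0"
  then have "0 < g * (norm x)\<^sup>2" by simp
  also have "\<dots> \<le> Re (cinner x (Dgam blk A g *v x))" using \<open>0 < g\<close> by (intro Dgam_pos) simp
  finally show "0 < Re (cinner x (Dgam blk A g *v x))" .
qed

lemma K_adj: "(Dgam blk A g + Lblk blk A) + cadj (Dgam blk A g + Lblk blk A) = Dgam blk A (2 * g) + A ** cadj A"
  by (auto simp: vec_eq_iff Dgam_def Lblk_def G_cnj)


(* ---- part W5 ---- *)


lemma mv_meas: "(\<lambda>x. (Bm::complex^'r^'n) *v x) \<in> borel_measurable borel"
  by (intro borel_measurable_continuous_onI linear_continuous_on bl_mv)

lemma mv_meas': "sets M = sets borel \<Longrightarrow> (\<lambda>x. (Bm::complex^'r^'n) *v x) \<in> measurable M borel"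
  using mv_meas measurable_cong_sets by blast

lemma conv_push:
  fixes Bm :: "complex^'r^'n" and X :: "nat \<Rightarrow> 'a \<Rightarrow> complex^'r"
  assumes c: "conv_in_distr P X \<mu>0"
  shows "conv_in_distr P (\<lambda>N \<omega>. Bm *v X N \<omega>) (distr \<mu>0 borel (\<lambda>x. Bm *v x))"
proof -
  have ps: "prob_space (P N)" and XN: "X N \<in> borel_measurable (P N)" for N
    using c by (auto simp: conv_in_distr_def)
  have p0: "prob_space \<mu>0" and s0: "sets \<mu>0 = sets borel"
    using c by (auto simp: conv_in_distr_def)
  have fm: "(\<lambda>x. Bm *v x) \<in> measurable \<mu>0 borel" by (rule mv_meas'[OF s0])
  have lim: "(\<lambda>N. \<integral>x. f (X N x) \<partial>P N) \<longlonglongrightarrow> (\<integral>x. f x \<partial>\<mu>0)"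
    if "continuous_on UNIV f" "bounded (range f)" for f :: "complex^'r \<Rightarrow> real"
    using c that by (auto simp: conv_in_distr_def)
  show ?thesis unfolding conv_in_distr_def
  proof (intro conjI allI impI)
    fix N show "prob_space (P N)" by (rule ps)
    show "(\<lambda>\<omega>. Bm *v X N \<omega>) \<in> borel_measurable (P N)"
      by (rule measurable_compose[OF XN mv_meas])
  next
    show "prob_space (distr \<mu>0 borel ((*v) Bm))"
      using prob_space.prob_space_distr[OF p0 fm] by simp
    show "sets (distr \<mu>0 borel ((*v) Bm)) = sets borel" by simp
  next
    fix f :: "complex^'n \<Rightarrow> real"
    assume cf: "continuous_on UNIV f" and bf: "bounded (range f)"
    have cg: "continuous_on UNIV (\<lambda>x. f (Bm *v x))"
      by (rule continuous_on_compose2[OF cf linear_continuous_on[OF bl_mv]]) auto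
    have bg: "bounded (range (\<lambda>x. f (Bm *v x)))"
      by (rule bounded_subset[OF bf]) auto
    have "integral\<^sup>L (distr \<mu>0 borel ((*v) Bm)) f = (\<integral>x. f (Bm *v x) \<partial>\<mu>0)"
      by (rule integral_distr[OF fm borel_measurable_continuous_onI[OF cf]])
    then show "(\<lambda>N. \<integral>x. f (Bm *v X N x) \<partial>P N) \<longlonglongrightarrow> integral\<^sup>L (distr \<mu>0 borel ((*v) Bm)) f"
      using lim[OF cg bg] by simp
  qed
qed

lemma moment_expand:
  "(Bm *v x) $ i * cnj ((Bm *v x) $ j) =
     (\<Sum>a\<in>UNIV. \<Sum>b\<in>UNIV. (Bm$i$a * cnj (Bm$j$b)) * (x$a * cnj (x$b)))"
  unfolding matrix_vector_mult_def
  by (simp add: cnj_sum sum_product mult_ac)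

lemma mat_expand:
  "(Bm ** Th ** cadj Bm) $ i $ j =
     (\<Sum>a\<in>UNIV. \<Sum>b\<in>UNIV. (Bm$i$a * cnj (Bm$j$b)) * Th$a$b)"
proof -
  have "(Bm ** Th ** cadj Bm) $ i $ j = (\<Sum>b\<in>UNIV. (\<Sum>a\<in>UNIV. Bm$i$a * Th$a$b) * cnj (Bm$j$b))"
    by (simp add: matrix_matrix_mult_def)
  also have "\<dots> = (\<Sum>b\<in>UNIV. \<Sum>a\<in>UNIV. (Bm$i$a * cnj (Bm$j$b)) * Th$a$b)"
    by (simp add: sum_distrib_left sum_distrib_right mult_ac)
  also have "\<dots> = (\<Sum>a\<in>UNIV. \<Sum>b\<in>UNIV. (Bm$i$a * cnj (Bm$j$b)) * Th$a$b)"
    by (rule sum.swap)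
  finally show ?thesis .
qed

lemma gauss_push:
  fixes Bm :: "complex^'r^'n"
  assumes g: "centered_gaussian \<mu>0 Th"
  shows "centered_gaussian (distr \<mu>0 borel (\<lambda>x. Bm *v x)) (Bm ** Th ** cadj Bm)"
proof -
  have p0: "prob_space \<mu>0" and s0: "sets \<mu>0 = sets borel" using g by (auto simp: centered_gaussian_def)
  have lin: "\<exists>v\<ge>0. distr \<mu>0 borel l = centered_normal v" if "linear l" for l :: "complex^'r \<Rightarrow> real"
    using g that by (auto simp: centered_gaussian_def)
  have mom: "integrable \<mu>0 (\<lambda>x. x $ a * cnj (x $ b))" "(\<integral>x. x $ a * cnj (x $ b) \<partial>\<mu>0) = Th $ a $ b" for a b
    using g by (auto simp: centered_gaussian_def)
  have fm: "(\<lambda>x. Bm *v x) \<in> measurable \<mu>0 borel" by (rule mv_meas'[OF s0])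
  have mij: "(\<lambda>y::complex^'n. y $ i * cnj (y $ j)) \<in> borel_measurable borel" for i j
    by (intro borel_measurable_continuous_onI continuous_intros)
  show ?thesis unfolding centered_gaussian_def
  proof (intro conjI allI impI)
    show "prob_space (distr \<mu>0 borel ((*v) Bm))"
      using prob_space.prob_space_distr[OF p0 fm] by simp
    show "sets (distr \<mu>0 borel ((*v) Bm)) = sets borel" by simp
  next
    fix l :: "complex^'n \<Rightarrow> real" assume l: "linear l"
    have lm: "l \<in> measurable borel borel"
      by (intro borel_measurable_continuous_onI linear_continuous_on linear_conv_bounded_linear[THEN iffD1] l)
    have "distr (distr \<mu>0 borel ((*v) Bm)) borel l = distr \<mu>0 borel (l \<circ> (*v) Bm)"
      by (rule distr_distr[OF lm fm])
    moreover have "linear (l \<circ> (*v) Bm)" by (rule linear_compose[OF matrix_vector_mul_linear l])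
    ultimately show "\<exists>v\<ge>0. distr (distr \<mu>0 borel ((*v) Bm)) borel l = centered_normal v"
      using lin by simp
  next
    fix i j
    have int: "integrable \<mu>0 (\<lambda>x. (Bm *v x) $ i * cnj ((Bm *v x) $ j))"
      unfolding moment_expand by (intro Bochner_Integration.integrable_sum integrable_mult_right mom)
    show "integrable (distr \<mu>0 borel ((*v) Bm)) (\<lambda>x. x $ i * cnj (x $ j))"
      using integrable_distr_eq[OF fm mij] int by simp
    have "(\<integral>x. x $ i * cnj (x $ j) \<partial>distr \<mu>0 borel ((*v) Bm)) =
        (\<integral>x. (Bm *v x) $ i * cnj ((Bm *v x) $ j) \<partial>\<mu>0)"
      by (rule integral_distr[OF fm mij])
    also have "\<dots> = (\<Sum>a\<in>UNIV. \<Sum>b\<in>UNIV. (Bm$i$a * cnj (Bm$j$b)) * Th$a$b)"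
      unfolding moment_expand
      by (simp add: Bochner_Integration.integral_sum Bochner_Integration.integrable_sum mom)
    also have "\<dots> = (Bm ** Th ** cadj Bm) $ i $ j" by (rule mat_expand[symmetric])
    finally show "(\<integral>x. x $ i * cnj (x $ j) \<partial>distr \<mu>0 borel ((*v) Bm)) = (Bm ** Th ** cadj Bm) $ i $ j" .
  qed
qed


(* ---- part W6 ---- *)


lemma onb_quad:
  fixes S :: "complex^'n^'n"
  assumes fB: "finite B" and span: "\<forall>x. (\<Sum>u\<in>B. cinner u x *s u) = x"
    and ev: "\<forall>u\<in>B. S *v u = complex_of_real (mu u) *s u"
  shows "Re (cinner x (S *v x)) = (\<Sum>u\<in>B. mu u * (cmod (cinner u x))\<^sup>2)"
proof -
  have "S *v x = S *v (\<Sum>u\<in>B. cinner u x *s u)" using span by simp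
  also have "\<dots> = (\<Sum>u\<in>B. cinner u x *s (S *v u))" by (simp add: mv_sum[OF fB] mv_scale)
  also have "\<dots> = (\<Sum>u\<in>B. (cinner u x * complex_of_real (mu u)) *s u)"
    by (intro sum.cong refl) (simp add: ev vector_smult_assoc)
  finally have "cinner x (S *v x) = (\<Sum>u\<in>B. (cinner u x * complex_of_real (mu u)) * cinner x u)"
    by (simp add: cinner_sum_right[OF fB] cinner_scale_right)
  also have "\<dots> = (\<Sum>u\<in>B. complex_of_real (mu u * (cmod (cinner u x))\<^sup>2))"
  proof (intro sum.cong refl)
    fix u
    have "cinner u x * complex_of_real (mu u) * cinner x u = complex_of_real (mu u) * (cinner u x * cnj (cinner u x))"
      by (simp add: cinner_commute[of x u])
    also have "\<dots> = complex_of_real (mu u * (cmod (cinner u x))\<^sup>2)"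
      by (simp add: complex_norm_square[symmetric])
    finally show "cinner u x * complex_of_real (mu u) * cinner x u = complex_of_real (mu u * (cmod (cinner u x))\<^sup>2)" .
  qed
  finally show ?thesis by simp
qed

lemma onb_norm:
  fixes x :: "complex^'n"
  assumes fB: "finite B" and span: "\<forall>x. (\<Sum>u\<in>B. cinner u x *s u) = x"
  shows "(norm x)\<^sup>2 = (\<Sum>u\<in>B. (cmod (cinner u x))\<^sup>2)"
proof -
  have "\<forall>u\<in>B. mat 1 *v u = complex_of_real 1 *s u" by simp
  from onb_quad[OF fB span this, of x] show ?thesis by (simp add: Re_cinner_self)
qed

lemma K_pos:
  assumes g: "\<gamma> > 0" and x: "x \<noteq> 0"
  shows "0 < Re (cinner x ((Dgam blk A \<gamma> + Lblk blk A) *v x))"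
proof -
  let ?K = "Dgam blk A \<gamma> + Lblk blk A"
  have e1: "Re (cinner x (cadj ?K *v x)) = Re (cinner x (?K *v x))"
  proof -
    have "cinner x (cadj ?K *v x) = cinner (?K *v x) x" by (simp add: cinner_mv)
    also have "\<dots> = cnj (cinner x (?K *v x))" by (rule cinner_commute)
    finally show ?thesis by simp
  qed
  have "cinner x ((?K + cadj ?K) *v x) = cinner x ((Dgam blk A (2 * \<gamma>) + A ** cadj A) *v x)"
    by (simp only: K_adj)
  note h0 = this
  have e2: "Re (cinner x (?K *v x)) + Re (cinner x (cadj ?K *v x)) =
      Re (cinner x (Dgam blk A (2 * \<gamma>) *v x)) + Re (cinner x ((A ** cadj A) *v x))"
    using arg_cong[where f=Re, OF h0] by (simp only: matrix_vector_mult_add_rdistrib cinner_add_right plus_complex.sel(1))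
  have e3: "Re (cinner x ((A ** cadj A) *v x)) = (norm (cadj A *v x))\<^sup>2"
    by (simp add: matrix_vector_mul_assoc[symmetric] cinner_mv cinner_self)
  have "2 * \<gamma> * (norm x)\<^sup>2 \<le> Re (cinner x (Dgam blk A (2 * \<gamma>) *v x))"
    using g by (intro Dgam_pos) simp
  moreover have "0 < 2 * \<gamma> * (norm x)\<^sup>2" using g x by simp
  ultimately show ?thesis using e1 e2 e3 by (smt (verit) zero_le_power2)
qed

lemma K_inv:
  assumes g: "\<gamma> > 0"
  shows "Mgam blk A \<gamma> ** (Dgam blk A \<gamma> + Lblk blk A) = mat 1 \<and> (Dgam blk A \<gamma> + Lblk blk A) ** Mgam blk A \<gamma> = mat 1"
proof -
  let ?K = "Dgam blk A \<gamma> + Lblk blk A"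
  have "\<forall>x. ?K *v x = 0 \<longrightarrow> x = 0"
  proof (intro allI impI)
    fix x assume "?K *v x = 0"
    then show "x = 0" using K_pos[OF g, of x blk A] by (cases "x = 0") auto
  qed
  then have "invertible ?K" by (simp add: invertible_left_inverse matrix_left_invertible_ker)
  then have "\<exists>A'. ?K ** A' = mat 1 \<and> A' ** ?K = mat 1" by (simp add: invertible_def)
  then have "?K ** matrix_inv ?K = mat 1 \<and> matrix_inv ?K ** ?K = mat 1"
    unfolding matrix_inv_def by (rule someI_ex)
  then show ?thesis by (simp add: Mgam_def)
qed


(* ---- part W7 ---- *)


lemma contraction:
  fixes A :: "complex^'n^'r" and blk :: "'r \<Rightarrow> nat"
  assumes g: "\<gamma> > 0" and A0: "A \<noteq> 0"
  shows "0 < sigma_gam blk A \<gamma> \<and> sigma_gam blk A \<gamma> \<le> 1 \<and>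
    (\<forall>y. (norm ((mat 1 - cadj A ** Mgam blk A \<gamma> ** A) *v (cadj A *v y)))\<^sup>2
          \<le> (1 - (sigma_gam blk A \<gamma>)\<^sup>2) * (norm (cadj A *v y))\<^sup>2)"
proof -
  define M where "M = Mgam blk A \<gamma>"
  define K where "K = Dgam blk A \<gamma> + Lblk blk A"
  define D2 where "D2 = Dgam blk A (2 * \<gamma>)"
  define Q where "Q = hpd_sqrt D2"
  define R where "R = Rgam blk A \<gamma>"
  define T where "T = mat 1 - cadj A ** M ** A"
  define G where "G = A ** cadj A"
  have MK: "M ** K = mat 1" "K ** M = mat 1" using K_inv[OF g, of blk A] by (auto simp: M_def K_def)
  have R_eq: "R = Q ** M ** A" by (simp add: R_def Rgam_def Q_def M_def D2_def)
  have Qp: "hpd_mat Q" "Q ** Q = D2"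
    using hpd_sqrt[OF Dgam_hpd[of "2 * \<gamma>" blk A]] g by (auto simp: Q_def D2_def)
  have Qadj: "cadj Q = Q" using Qp(1) by (simp add: hpd_mat_def hermitian_mat_def)
  have KD: "K + cadj K = D2 + G" unfolding K_def D2_def G_def by (rule K_adj)
  have Tx: "T *v x = x - cadj A *v (M *v (A *v x))" for x
    by (simp add: T_def matrix_vector_mult_diff_rdistrib matrix_vector_mul_assoc matrix_mul_assoc)
  have Rx: "R *v x = Q *v (M *v (A *v x))" for x
    by (simp add: R_eq matrix_vector_mul_assoc matrix_mul_assoc)
  have ident: "(norm (T *v x))\<^sup>2 + (norm (R *v x))\<^sup>2 = (norm x)\<^sup>2" for x
  proof -
    define a where "a = A *v x"
    define m where "m = M *v a"
    have Km: "K *v m = a" using MK(2) by (simp add: m_def matrix_vector_mul_assoc)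
    have c1: "cinner x (cadj A *v m) = cinner a m" by (simp add: cinner_mv a_def)
    have c2: "cinner (cadj A *v m) x = cinner m a"
      using c1 cinner_commute[of "cadj A *v m" x] cinner_commute[of m a] by simp
    have c3: "cinner (cadj A *v m) (cadj A *v m) = cinner m (G *v m)"
      using cinner_mv[of m A "cadj A *v m"] by (simp add: G_def matrix_vector_mul_assoc)
    have T2: "cinner (T *v x) (T *v x) = cinner x x - cinner a m - cinner m a + cinner m (G *v m)"
      unfolding Tx a_def[symmetric] m_def[symmetric] cinner_diff_left cinner_diff_right c1 c2 c3
      by (simp add: algebra_simps)
    have "cinner (R *v x) (R *v x) = cinner (Q *v m) (Q *v m)" by (simp add: Rx a_def m_def)
    also have "\<dots> = cinner m (Q *v (Q *v m))"
      using cinner_mv[of m Q "Q *v m"] by (simp add: Qadj)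
    also have "Q *v (Q *v m) = D2 *v m" by (simp add: matrix_vector_mul_assoc Qp(2))
    also have "D2 = K + cadj K - G" using KD by (simp add: algebra_simps)
    also have "cinner m ((K + cadj K - G) *v m) = cinner m (K *v m) + cinner m (cadj K *v m) - cinner m (G *v m)"
      by (simp add: matrix_vector_mult_diff_rdistrib matrix_vector_mult_add_rdistrib cinner_add_right cinner_diff_right)
    also have "cinner m (cadj K *v m) = cinner a m" using cinner_mv[of m "cadj K" m] by (simp add: Km)
    finally have R2: "cinner (R *v x) (R *v x) = cinner m a + cinner a m - cinner m (G *v m)"
      by (simp add: Km)
    have "cinner (T *v x) (T *v x) + cinner (R *v x) (R *v x) = cinner x x"
      by (simp add: T2 R2)
    then have "Re (cinner (T *v x) (T *v x)) + Re (cinner (R *v x) (R *v x)) = Re (cinner x x)"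
      by (metis plus_complex.sel(1))
    then show ?thesis by (simp add: Re_cinner_self)
  qed
  define S where "S = cadj R ** R"
  have Sh: "hermitian_mat S" by (simp add: hermitian_mat_def S_def cadj_mult)
  obtain B mu where fB: "finite B" and on1: "\<forall>u\<in>B. cinner u u = 1"
    and on0: "\<forall>u\<in>B. \<forall>v\<in>B. u \<noteq> v \<longrightarrow> cinner u v = 0"
    and ev: "\<forall>u\<in>B. S *v u = complex_of_real (mu u) *s u"
    and span: "\<forall>x. (\<Sum>u\<in>B. cinner u x *s u) = x"
    using spectral[OF Sh] by blast
  have SR: "cinner x (S *v x) = complex_of_real ((norm (R *v x))\<^sup>2)" for x
    using cinner_mv[of x "cadj R" "R *v x"] by (simp add: S_def matrix_vector_mul_assoc cinner_self)
  have mu_eq: "mu u = (norm (R *v u))\<^sup>2" if "u \<in> B" for u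
  proof -
    have "cinner u (S *v u) = complex_of_real (mu u)" using ev on1 that by (simp add: cinner_scale_right)
    then show ?thesis using SR[of u] by (metis of_real_eq_iff)
  qed
  have nu: "norm u = 1" if "u \<in> B" for u
  proof -
    have "(norm u)\<^sup>2 = 1" using on1 that cinner_self[of u] by (metis of_real_eq_1_iff)
    then show ?thesis by (metis real_sqrt_abs real_sqrt_one abs_norm_cancel)
  qed
  have mu_nn: "0 \<le> mu u" if "u \<in> B" for u using mu_eq[OF that] by simp
  have mu_le: "mu u \<le> 1" if "u \<in> B" for u
  proof -
    have "(norm u)\<^sup>2 = 1" using nu[OF that] by simp
    then show ?thesis using mu_eq[OF that] ident[of u] zero_le_power2[of "norm (T *v u)"] by linarith
  qed
  have Rinj: "A *v v = 0" if "R *v v = 0" for v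
  proof -
    have "Q *v (M *v (A *v v)) + complex_of_real 0 *s (M *v (A *v v)) = 0" using that by (simp add: Rx)
    then have "M *v (A *v v) = 0" using hpd_inj[OF Qp(1)] by blast
    then have "K *v (M *v (A *v v)) = 0" by simp
    then show ?thesis using MK(2) by (simp add: matrix_vector_mul_assoc matrix_mul_assoc)
  qed
  define X where "X = singular_values R - {0}"
  define Y where "Y = (\<lambda>u. sqrt (mu u)) ` {u\<in>B. mu u > 0}"
  have XY: "X = Y"
  proof
    show "X \<subseteq> Y"
    proof
      fix s assume "s \<in> X"
      then obtain v where s0: "0 \<le> s" "s \<noteq> 0" and v: "v \<noteq> 0" and Sv: "S *v v = complex_of_real (s\<^sup>2) *s v"
        by (auto simp: X_def singular_values_def S_def)
      obtain u where u: "u \<in> B" "cinner u v \<noteq> 0"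
      proof (rule ccontr)
        assume "\<not> thesis"
        then have "\<forall>u\<in>B. cinner u v = 0" using that by blast
        then have "(\<Sum>u\<in>B. cinner u v *s u) = 0" by simp
        then show False using span v by simp
      qed
      have "cinner u (S *v v) = cinner (S *v u) v" using cinner_mv[of u S v] Sh by (simp add: hermitian_mat_def)
      also have "\<dots> = complex_of_real (mu u) * cinner u v" using ev u(1) by (simp add: cinner_scale_left)
      finally have "complex_of_real (mu u) * cinner u v = complex_of_real (s\<^sup>2) * cinner u v"
        using Sv by (simp add: cinner_scale_right) metis
      then have "complex_of_real (mu u) = complex_of_real (s\<^sup>2)" using u(2) by (metis mult_cancel_right)
      then have "mu u = s\<^sup>2" by (metis of_real_eq_iff)
      then have "s = sqrt (mu u)" "mu u > 0" using s0 by auto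
      then show "s \<in> Y" using u(1) by (auto simp: Y_def)
    qed
  next
    show "Y \<subseteq> X"
    proof
      fix s assume "s \<in> Y"
      then obtain u where u: "u \<in> B" "mu u > 0" and s: "s = sqrt (mu u)" by (auto simp: Y_def)
      have "u \<noteq> 0" using on1 u(1) by auto
      have s2: "s\<^sup>2 = mu u" using u(2) s by simp
      have e: "S *v u = complex_of_real (mu u) *s u" using ev u(1) by blast
      have e2: "(cadj R ** R) *v u = complex_of_real (s\<^sup>2) *s u" unfolding s2 using e by (simp only: S_def)
      have "0 \<le> s" "s \<noteq> 0" using u(2) s by auto
      then show "s \<in> X" unfolding X_def singular_values_def using \<open>u \<noteq> 0\<close> e2 by blast
    qed
  qed
  have fX: "finite X" using XY fB by (simp add: Y_def)
  have neX: "X \<noteq> {}"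
  proof
    assume "X = {}"
    then have "\<forall>u\<in>B. mu u = 0" using XY mu_nn by (force simp: Y_def)
    then have "\<forall>u\<in>B. A *v u = 0 *v u" using mu_eq Rinj by simp
    then have "A = 0" using onb_ext[OF fB span, of A 0] by simp
    then show False using A0 by simp
  qed
  have sig: "sigma_gam blk A \<gamma> = Min X"
    by (simp add: sigma_gam_def min_nonzero_sv_def R_def[symmetric] X_def[symmetric] cInf_eq_Min[OF fX neX])
  define \<sigma> where "\<sigma> = sigma_gam blk A \<gamma>"
  have sX: "\<sigma> \<in> X" using sig fX neX by (simp add: \<sigma>_def)
  have sle: "\<sigma> \<le> s" if "s \<in> X" for s using sig fX that by (simp add: \<sigma>_def)
  obtain u0 where u0: "u0 \<in> B" "mu u0 > 0" "\<sigma> = sqrt (mu u0)" using sX XY by (auto simp: Y_def)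
  have spos: "0 < \<sigma>" using u0 by simp
  have sle1: "\<sigma> \<le> 1" using u0 mu_le by simp
  have bound: "(norm (T *v (cadj A *v y)))\<^sup>2 \<le> (1 - \<sigma>\<^sup>2) * (norm (cadj A *v y))\<^sup>2" for y
  proof -
    define x where "x = cadj A *v y"
    have "(norm (R *v x))\<^sup>2 = Re (cinner x (S *v x))" by (simp add: SR)
    also have "\<dots> = (\<Sum>u\<in>B. mu u * (cmod (cinner u x))\<^sup>2)" by (rule onb_quad[OF fB span ev])
    finally have n1: "(norm (R *v x))\<^sup>2 = (\<Sum>u\<in>B. mu u * (cmod (cinner u x))\<^sup>2)" .
    have "\<sigma>\<^sup>2 * (norm x)\<^sup>2 = (\<Sum>u\<in>B. \<sigma>\<^sup>2 * (cmod (cinner u x))\<^sup>2)"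
      by (simp add: onb_norm[OF fB span] sum_distrib_left)
    also have "\<dots> \<le> (\<Sum>u\<in>B. mu u * (cmod (cinner u x))\<^sup>2)"
    proof (rule sum_mono)
      fix u assume u: "u \<in> B"
      show "\<sigma>\<^sup>2 * (cmod (cinner u x))\<^sup>2 \<le> mu u * (cmod (cinner u x))\<^sup>2"
      proof (cases "mu u > 0")
        case True
        then have "sqrt (mu u) \<in> X" using XY u by (auto simp: Y_def)
        then have "\<sigma> \<le> sqrt (mu u)" by (rule sle)
        then have "\<sigma>\<^sup>2 \<le> mu u" using spos True
          by (metis less_imp_le power_mono real_sqrt_pow2)
        then show ?thesis by (simp add: mult_right_mono)
      next
        case False
        then have "mu u = 0" using mu_nn[OF u] by simp
        then have "R *v u = 0" using mu_eq[OF u] by simp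
        then have "A *v u = 0" by (rule Rinj)
        then have "cinner u x = 0" using cinner_mv[of u "cadj A" y] by (simp add: x_def)
        then show ?thesis by simp
      qed
    qed
    finally have "\<sigma>\<^sup>2 * (norm x)\<^sup>2 \<le> (norm (R *v x))\<^sup>2" using n1 by simp
    then show ?thesis using ident[of x] by (simp add: x_def algebra_simps)
  qed
  show ?thesis using spos sle1 bound by (simp add: \<sigma>_def T_def M_def)
qed


(* ---- part W8 ---- *)


primrec Bit :: "complex^'n^'n \<Rightarrow> complex^'r^'n \<Rightarrow> nat \<Rightarrow> complex^'r^'n" where
  "Bit T C 0 = 0"
| "Bit T C (Suc k) = T ** Bit T C k + C"

lemma qiter_Bit: "qiter A M p k = Bit (mat 1 - cadj A ** M ** A) (cadj A ** M) k *v p"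
  by (induction k) (simp_all add: matrix_vector_mult_add_rdistrib matrix_vector_mul_assoc)

lemma Bit_bound:
  fixes A :: "complex^'n^'r" and T :: "complex^'n^'n" and C :: "complex^'m^'n"
  assumes c0: "0 \<le> c" and Tc: "\<forall>y. norm (T *v (cadj A *v y)) \<le> c * norm (cadj A *v y)"
    and TV: "\<forall>y. \<exists>z. T *v (cadj A *v y) = cadj A *v z" and CV: "\<forall>d. \<exists>z. C *v d = cadj A *v z"
  shows "(\<exists>z. Bit T C k *v d = cadj A *v z) \<and> norm (Bit T C k *v d) \<le> (\<Sum>j<k. c^j) * norm (C *v d)"
proof (induction k)
  case 0
  show ?case by (auto intro: exI[of _ 0])
next
  case (Suc k)
  then obtain z where z: "Bit T C k *v d = cadj A *v z" and nb: "norm (Bit T C k *v d) \<le> (\<Sum>j<k. c^j) * norm (C *v d)"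
    by blast
  obtain z1 where z1: "T *v (cadj A *v z) = cadj A *v z1" using TV by blast
  obtain z2 where z2: "C *v d = cadj A *v z2" using CV by blast
  have e: "Bit T C (Suc k) *v d = T *v (Bit T C k *v d) + C *v d"
    by (simp add: matrix_vector_mult_add_rdistrib matrix_vector_mul_assoc)
  have "Bit T C (Suc k) *v d = cadj A *v (z1 + z2)"
    by (simp only: e z z1 z2 matrix_vector_right_distrib)
  moreover have "norm (Bit T C (Suc k) *v d) \<le> (\<Sum>j<Suc k. c^j) * norm (C *v d)"
  proof -
    have "norm (Bit T C (Suc k) *v d) \<le> norm (T *v (Bit T C k *v d)) + norm (C *v d)"
      unfolding e by (rule norm_triangle_ineq)
    also have "norm (T *v (Bit T C k *v d)) \<le> c * norm (Bit T C k *v d)"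
      using Tc z by simp
    also have "c * norm (Bit T C k *v d) \<le> c * ((\<Sum>j<k. c^j) * norm (C *v d))"
      by (rule mult_left_mono[OF nb c0])
    also have "c * ((\<Sum>j<k. c^j) * norm (C *v d)) + norm (C *v d) = (\<Sum>j<Suc k. c^j) * norm (C *v d)"
      by (simp add: sum.lessThan_Suc_shift sum_distrib_left algebra_simps del: sum.lessThan_Suc)
    finally show ?thesis by simp
  qed
  ultimately show ?case by blast
qed

lemma cmat_norm_zero: "cmat_norm (0::complex^'n^'m) = 0"
proof -
  have "cmat_norm (0::complex^'n^'m) \<le> 0" by (rule cmat_norm_le) simp_all
  then show ?thesis using cmat_norm_nonneg[of "0::complex^'n^'m"] by linarith
qed

lemma Bit_zero: "Bit T 0 k = 0"
  by (induction k) simp_all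

theorem corollary3p4:
  fixes A :: "complex^'n^'r" and blk :: "'r \<Rightarrow> nat" and \<gamma> :: real
    and p :: "complex^'r" and \<Theta> :: "complex^'r^'r"
    and P :: "nat \<Rightarrow> 'a measure" and pt :: "nat \<Rightarrow> 'a \<Rightarrow> complex^'r" and k :: nat
  assumes "\<gamma> > 0"
    and "rank A = CARD('r)"
    and "\<exists>\<mu>0. centered_gaussian \<mu>0 \<Theta> \<and>
           conv_in_distr P (\<lambda>N \<omega>. sqrt (real N) *\<^sub>R (pt N \<omega> - p)) \<mu>0"
    and "k \<ge> 1"
  shows "\<exists>\<Lambda> \<mu>. centered_gaussian \<mu> \<Lambda> \<and>
           conv_in_distr P (\<lambda>N \<omega>. sqrt (real N) *\<^sub>R
               (qiter A (Mgam blk A \<gamma>) (pt N \<omega>) k - qiter A (Mgam blk A \<gamma>) p k)) \<mu> \<and>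
           cmat_norm \<Lambda> \<le>
             ((1 - sqrt (1 - (sigma_gam blk A \<gamma>)\<^sup>2) ^ k) / (1 - sqrt (1 - (sigma_gam blk A \<gamma>)\<^sup>2)))\<^sup>2
             * (cmat_norm (cadj A ** Mgam blk A \<gamma>))\<^sup>2 * cmat_norm \<Theta>"
proof -
  note g = assms(1)
  obtain \<mu>0 where g0: "centered_gaussian \<mu>0 \<Theta>"
    and c0: "conv_in_distr P (\<lambda>N \<omega>. sqrt (real N) *\<^sub>R (pt N \<omega> - p)) \<mu>0"
    using assms(3) by blast
  define M where "M = Mgam blk A \<gamma>"
  define T where "T = mat 1 - cadj A ** M ** A"
  define C where "C = cadj A ** M"
  define Bk where "Bk = Bit T C k"
  define \<sigma> where "\<sigma> = sigma_gam blk A \<gamma>"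
  define c where "c = sqrt (1 - \<sigma>\<^sup>2)"
  define gk where "gk = (1 - c ^ k) / (1 - c)"
  have eq: "(\<lambda>N \<omega>. sqrt (real N) *\<^sub>R (qiter A M (pt N \<omega>) k - qiter A M p k)) =
      (\<lambda>N \<omega>. Bk *v (sqrt (real N) *\<^sub>R (pt N \<omega> - p)))"
    by (simp add: qiter_Bit Bk_def T_def C_def matrix_vector_mult_diff_distrib mv_scaleR)
  have conv: "conv_in_distr P (\<lambda>N \<omega>. sqrt (real N) *\<^sub>R (qiter A M (pt N \<omega>) k - qiter A M p k))
      (distr \<mu>0 borel (\<lambda>x. Bk *v x))"
    unfolding eq by (rule conv_push[OF c0])
  have gau: "centered_gaussian (distr \<mu>0 borel (\<lambda>x. Bk *v x)) (Bk ** \<Theta> ** cadj Bk)"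
    by (rule gauss_push[OF g0])
  have nL: "cmat_norm (Bk ** \<Theta> ** cadj Bk) \<le> (cmat_norm Bk)\<^sup>2 * cmat_norm \<Theta>"
  proof -
    have "cmat_norm (Bk ** \<Theta> ** cadj Bk) \<le> cmat_norm (Bk ** \<Theta>) * cmat_norm (cadj Bk)"
      by (rule cmat_norm_mult)
    also have "\<dots> \<le> (cmat_norm Bk * cmat_norm \<Theta>) * cmat_norm Bk"
      by (intro mult_mono cmat_norm_mult cmat_norm_cadj cmat_norm_nonneg mult_nonneg_nonneg)
    finally show ?thesis by (simp add: power2_eq_square mult_ac)
  qed
  have nB: "cmat_norm Bk \<le> gk * cmat_norm C"
  proof (cases "A = 0")
    case True
    then have "C = 0" by (simp add: C_def)
    then have "Bk = 0" by (simp add: Bk_def Bit_zero)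
    then show ?thesis using \<open>C = 0\<close> by (simp add: cmat_norm_zero)
  next
    case False
    have ct: "0 < \<sigma>" "\<sigma> \<le> 1"
      and bd: "\<And>y. (norm (T *v (cadj A *v y)))\<^sup>2 \<le> (1 - \<sigma>\<^sup>2) * (norm (cadj A *v y))\<^sup>2"
      using contraction[OF g False, of blk] by (auto simp: \<sigma>_def T_def M_def)
    have s2: "0 \<le> 1 - \<sigma>\<^sup>2" using ct by (simp add: power_le_one)
    have s3: "1 - \<sigma>\<^sup>2 < 1" using ct by simp
    have c0': "0 \<le> c" using s2 by (simp add: c_def)
    have c1: "c < 1" using s2 s3 by (simp add: c_def)
    have Tc: "\<forall>y. norm (T *v (cadj A *v y)) \<le> c * norm (cadj A *v y)"
    proof
      fix y
      have "norm (T *v (cadj A *v y)) = sqrt ((norm (T *v (cadj A *v y)))\<^sup>2)" by simp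
      also have "\<dots> \<le> sqrt ((1 - \<sigma>\<^sup>2) * (norm (cadj A *v y))\<^sup>2)" by (rule real_sqrt_le_mono[OF bd])
      also have "\<dots> = c * norm (cadj A *v y)" by (simp add: c_def real_sqrt_mult)
      finally show "norm (T *v (cadj A *v y)) \<le> c * norm (cadj A *v y)" .
    qed
    have TV: "\<forall>y. \<exists>z. T *v (cadj A *v y) = cadj A *v z"
    proof
      fix y
      have Tx: "T *v v = v - cadj A *v (M *v (A *v v))" for v
        by (simp add: T_def matrix_vector_mult_diff_rdistrib matrix_vector_mul_assoc matrix_mul_assoc)
      have "T *v (cadj A *v y) = cadj A *v y - cadj A *v (M *v (A *v (cadj A *v y)))"
        by (rule Tx)
      also have "\<dots> = cadj A *v (y - M *v (A *v (cadj A *v y)))"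
        by (simp only: matrix_vector_mult_diff_distrib)
      finally have "T *v (cadj A *v y) = cadj A *v (y - M *v (A *v (cadj A *v y)))" .
      then show "\<exists>z. T *v (cadj A *v y) = cadj A *v z" by blast
    qed
    have CV: "\<forall>d. \<exists>z. C *v d = cadj A *v z"
      by (auto simp: C_def matrix_vector_mul_assoc[symmetric])
    have gs: "(\<Sum>j<k. c^j) = gk" using c1 by (simp add: gk_def sum_gp_strict)
    have gk0: "0 \<le> gk" unfolding gs[symmetric] using c0' by (simp add: sum_nonneg)
    show ?thesis
    proof (rule cmat_norm_le)
      show "0 \<le> gk * cmat_norm C" using gk0 by (simp add: cmat_norm_nonneg)
      fix d
      have "norm (Bk *v d) \<le> gk * norm (C *v d)"
        using Bit_bound[OF c0' Tc TV CV, of k d] gs by (simp add: Bk_def)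
      also have "\<dots> \<le> gk * (cmat_norm C * norm d)" by (intro mult_left_mono cmat_norm_bound gk0)
      finally show "norm (Bk *v d) \<le> gk * cmat_norm C * norm d" by (simp add: mult_ac)
    qed
  qed
  have "cmat_norm (Bk ** \<Theta> ** cadj Bk) \<le> gk\<^sup>2 * (cmat_norm C)\<^sup>2 * cmat_norm \<Theta>"
  proof -
    have "(cmat_norm Bk)\<^sup>2 \<le> (gk * cmat_norm C)\<^sup>2"
      by (intro power_mono nB cmat_norm_nonneg)
    then have "(cmat_norm Bk)\<^sup>2 * cmat_norm \<Theta> \<le> (gk * cmat_norm C)\<^sup>2 * cmat_norm \<Theta>"
      by (intro mult_right_mono cmat_norm_nonneg)
    then show ?thesis using nL by (simp add: power_mult_distrib)
  qed
  then show ?thesis using conv gau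
    unfolding gk_def c_def \<sigma>_def C_def M_def by blast
qed


end
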